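(* Let $p,r,n$ be natural numbers with $p+r\le n$, and let $\sigma$ be the involution of $\mathrm{Match}(\mathcal G_n)_{p,r}$ induced by reflecting $\mathcal G_n$ across its vertical axis of symmetry. Then $$\binom{n-r}{p}_{-1}\binom{n+1-p}{r}_{-1}=\big|\{P\in\mathrm{Match}(\mathcal G_n)_{p,r}:\sigma(P)=P\}\big|.$$
   Context: $\mathcal G_n$ ($n\ge0$) is a horizontal row of $2n+1$ unit square tiles $G_{-n},\dots,G_n$ (left to right, consecutive tiles sharing a vertical edge), where $G_i$ has face weight $1$ if $i+n$ is even and $2$ if $i+n$ is odd. $P_{min}$ is the perfect matching consisting of the top and bottom edges of all tiles of face weight $1$. For a perfect matching $P$, $\mathrm{Twist}(P)$ is the set of tiles in the interior of cycles of $P\triangle P_{min}$, and $y_i(P)$ the number of twisted tiles of face weight $i$. $\mathrm{Match}(\mathcal G_n)_{p,r}$ is the set of perfect matchings $P$ with $y_1(P)=n+1-r$ and $y_2(P)=p$; the reflection preserves $y_1,y_2$ and hence restricts to an involution $\sigma$ of this set. $\binom nk_{-1}$ is the value at $q=-1$ of the Gaussian binomial $\frac{(n)_q!}{(k)_q!(n-k)_q!}$, $(n)_q=1+q+\dots+q^{n-1}$. *)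

theory Defs
  imports "HOL-Computational_Algebra.Polynomial"
begin

definition qint :: "nat \<Rightarrow> real poly" where
  "qint m = (\<Sum>i<m. monom 1 i)"

definition qfact :: "nat \<Rightarrow> real poly" where
  "qfact m = (\<Prod>i\<in>{1..m}. qint i)"

definition gauss_binom_poly :: "nat \<Rightarrow> nat \<Rightarrow> real poly" where
  "gauss_binom_poly m k =
     (if k \<le> m then qfact m div (qfact k * qfact (m - k)) else 0)"

definition gauss_binom_m1 :: "nat \<Rightarrow> nat \<Rightarrow> real" where
  "gauss_binom_m1 m k = poly (gauss_binom_poly m k) (-1)"

(* The snake graph G_n: a horizontal row of 2n+1 unit tiles.
   Tile j (0 \<le> j \<le> 2n) is the square [j,j+1]x[0,1]; it is the paper's tile G_{j-n},
   so it has face weight 1 iff j is even. *)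
type_synonym vert = "nat \<times> nat"
type_synonym edge = "vert set"

definition verts :: "nat \<Rightarrow> vert set" where
  "verts n = {(x,y). x \<le> 2*n+1 \<and> y \<le> 1}"

definition hedge :: "nat \<Rightarrow> nat \<Rightarrow> edge" where
  "hedge x y = {(x,y), (x+1,y)}"

definition vedge :: "nat \<Rightarrow> edge" where
  "vedge x = {(x,0), (x,1)}"

definition edges :: "nat \<Rightarrow> edge set" where
  "edges n = {hedge x y | x y. x \<le> 2*n \<and> y \<le> 1} \<union> {vedge x | x. x \<le> 2*n+1}"

definition perfect_matching :: "nat \<Rightarrow> edge set \<Rightarrow> bool" where
  "perfect_matching n P \<longleftrightarrow> P \<subseteq> edges n \<and> (\<forall>v\<in>verts n. \<exists>!e. e \<in> P \<and> v \<in> e)"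

definition face_weight :: "nat \<Rightarrow> nat" where
  "face_weight j = (if even j then 1 else 2)"

definition Pmin :: "nat \<Rightarrow> edge set" where
  "Pmin n = {hedge j y | j y. j \<le> 2*n \<and> y \<le> 1 \<and> face_weight j = 1}"

(* The cycle of the ladder graph bounding the block of tiles a..b
   (every cycle of G_n is of this form, and its interior is tiles a..b). *)
definition block_cycle :: "nat \<Rightarrow> nat \<Rightarrow> edge set" where
  "block_cycle a b = {vedge a, vedge (b+1)} \<union> {hedge x y | x y. a \<le> x \<and> x \<le> b \<and> y \<le> 1}"

definition symdiff :: "'a set \<Rightarrow> 'a set \<Rightarrow> 'a set" where
  "symdiff A B = (A - B) \<union> (B - A)"

definition Twist :: "nat \<Rightarrow> edge set \<Rightarrow> nat set" where
  "Twist n P = {t. t \<le> 2*n \<and> (\<exists>a b. a \<le> t \<and> t \<le> b \<and> b \<le> 2*n \<and>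
                 block_cycle a b \<subseteq> symdiff P (Pmin n))}"

definition y_count :: "nat \<Rightarrow> nat \<Rightarrow> edge set \<Rightarrow> nat" where
  "y_count n i P = card {t \<in> Twist n P. face_weight t = i}"

definition Match :: "nat \<Rightarrow> nat \<Rightarrow> nat \<Rightarrow> edge set set" where
  "Match n p r = {P. perfect_matching n P \<and> y_count n 1 P = n + 1 - r \<and> y_count n 2 P = p}"

definition reflect :: "nat \<Rightarrow> edge set \<Rightarrow> edge set" where
  "reflect n P = (\<lambda>e. (\<lambda>(x,y). (2*n+1-x, y)) ` e) ` P"

end

theory Submission
  imports Defs
begin

fun qb :: "nat \<Rightarrow> nat \<Rightarrow> real poly" where
  "qb m 0 = 1"
| "qb 0 (Suc k) = 0"
| "qb (Suc m) (Suc k) = qb m k + monom 1 (Suc k) * qb m (Suc k)"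

lemma qb_zero: "m < k \<Longrightarrow> qb m k = 0"
proof (induction m arbitrary: k)
  case 0 then show ?case by (cases k) auto
next
  case (Suc m) then show ?case by (cases k) auto
qed

lemma qint_add: "qint (a + b) = qint a + monom 1 a * qint b"
proof (induction b)
  case 0 then show ?case by (simp add: qint_def)
next
  case (Suc b)
  have "qint (a + Suc b) = qint (a + b) + monom 1 (a + b)" by (simp add: qint_def)
  also have "\<dots> = qint a + monom 1 a * (qint b + monom 1 b)"
    using Suc by (simp add: algebra_simps mult_monom)
  also have "qint b + monom 1 b = qint (Suc b)" by (simp add: qint_def)
  finally show ?case .
qed

lemma qfact_Suc: "qfact (Suc m) = qint (Suc m) * qfact m"
  unfolding qfact_def by (simp add: prod.atLeast1_atMost_eq prod.lessThan_Suc mult.commute)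

lemma qfact_eq: "k \<le> m \<Longrightarrow> qfact m = qb m k * qfact k * qfact (m - k)"
proof (induction m arbitrary: k)
  case 0 then show ?case by (simp add: qfact_def)
next
  case (Suc m)
  show ?case
  proof (cases k)
    case 0 then show ?thesis by (simp add: qfact_def)
  next
    case (Suc j)
    with Suc.prems have jm: "j \<le> m" by simp
    have A: "qb m j * qfact (Suc j) * qfact (m - j) = qfact m * qint (Suc j)"
      using Suc.IH[OF jm] by (simp add: qfact_Suc algebra_simps)
    have B: "monom 1 (Suc j) * qb m (Suc j) * qfact (Suc j) * qfact (m - j)
             = qfact m * (monom 1 (Suc j) * qint (m - j))"
    proof (cases "Suc j \<le> m")
      case True
      have "m - j = Suc (m - Suc j)" using True by simp
      then show ?thesis using Suc.IH[OF True] by (simp add: qfact_Suc algebra_simps)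
    next
      case False
      then have "m = j" using jm by simp
      then show ?thesis by (simp add: qb_zero qint_def)
    qed
    have "qint (Suc m) = qint (Suc j) + monom 1 (Suc j) * qint (m - j)"
      using qint_add[of "Suc j" "m - j"] jm by simp
    then have "qfact (Suc m) = qfact m * qint (Suc j) + qfact m * (monom 1 (Suc j) * qint (m - j))"
      by (simp add: qfact_Suc algebra_simps)
    also have "\<dots> = qb (Suc m) k * qfact k * qfact (Suc m - k)"
      using A B Suc by (simp add: algebra_simps)
    finally show ?thesis .
  qed
qed

lemma qint_nz: "i \<ge> 1 \<Longrightarrow> qint i \<noteq> 0"
proof -
  assume "i \<ge> 1"
  then have "coeff (qint i) 0 = 1" unfolding qint_def by (simp add: coeff_sum)
  then show ?thesis by auto
qed

lemma qfact_nz: "qfact m \<noteq> 0"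
  unfolding qfact_def using qint_nz by (simp add: prod_zero_iff)

lemma gbp_qb: "gauss_binom_poly m k = qb m k"
proof (cases "k \<le> m")
  case True
  then show ?thesis unfolding gauss_binom_poly_def
    using qfact_eq[OF True] qfact_nz by (simp add: mult.assoc)
next
  case False then show ?thesis by (simp add: gauss_binom_poly_def qb_zero)
qed

definition gg :: "nat \<Rightarrow> nat \<Rightarrow> nat" where
  "gg m k = (if even m \<and> odd k then 0 else (m div 2) choose (k div 2))"

lemma poly_qb: "poly (qb m k) (-1) = real (gg m k)"
proof (induction m arbitrary: k)
  case 0 then show ?case by (cases k) (auto simp: gg_def)
next
  case (Suc m)
  show ?case
  proof (cases k)
    case 0 then show ?thesis by (simp add: gg_def)
  next
    case (Suc j)
    have "poly (qb (Suc m) k) (-1) = real (gg m j) + (-1)^(Suc j) * real (gg m (Suc j))"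
      using Suc.IH Suc by (simp add: poly_monom)
    also have "\<dots> = real (gg (Suc m) k)"
    proof -
      obtain M where M: "m = 2*M \<or> m = 2*M+1" by (metis oddE evenE)
      obtain J where J: "j = 2*J \<or> j = 2*J+1" by (metis oddE evenE)
      from M J show ?thesis using Suc
        by (auto simp: gg_def)
    qed
    finally show ?thesis .
  qed
qed

lemma gauss_gg: "gauss_binom_m1 m k = real (gg m k)"
  by (simp add: gauss_binom_m1_def gbp_qb poly_qb)

definition indep :: "nat \<Rightarrow> nat set set" where
  "indep n = {H. H \<subseteq> {..2*n} \<and> (\<forall>x\<in>H. Suc x \<notin> H) \<and> (\<forall>x\<in>H. 2*n - x \<in> H)}"

definition ev :: "nat set \<Rightarrow> nat" where "ev H = card {x\<in>H. even x}"
definition od :: "nat set \<Rightarrow> nat" where "od H = card {x\<in>H. odd x}"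

definition sh :: "nat set \<Rightarrow> nat set" where "sh K = (\<lambda>x. x + 2) ` K"

lemma indep_fin: "H \<in> indep n \<Longrightarrow> finite H"
  unfolding indep_def using finite_subset by blast

lemma sh_mem: "y \<in> sh K \<longleftrightarrow> 2 \<le> y \<and> y - 2 \<in> K"
proof
  assume "y \<in> sh K" then show "2 \<le> y \<and> y - 2 \<in> K" unfolding sh_def by auto
next
  assume h: "2 \<le> y \<and> y - 2 \<in> K"
  then have "y = (y - 2) + 2" by arith
  with h show "y \<in> sh K" unfolding sh_def by blast
qed

lemma ev_sh_Un:
  assumes "finite K" "finite E" "sh K \<inter> E = {}"
  shows "ev (sh K \<union> E) = ev K + ev E" "od (sh K \<union> E) = od K + od E"
proof -
  have i: "inj_on (\<lambda>x::nat. Suc (Suc x)) A" for A by (auto simp: inj_on_def)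
  have e1: "{x \<in> sh K \<union> E. even x} = (\<lambda>x. x + 2) ` {x\<in>K. even x} \<union> {x\<in>E. even x}"
    unfolding sh_def by auto
  have e2: "{x \<in> sh K \<union> E. odd x} = (\<lambda>x. x + 2) ` {x\<in>K. odd x} \<union> {x\<in>E. odd x}"
    unfolding sh_def by auto
  have d1: "(\<lambda>x. x + 2) ` {x\<in>K. even x} \<inter> {x\<in>E. even x} = {}" using assms(3) unfolding sh_def by auto
  have d2: "(\<lambda>x. x + 2) ` {x\<in>K. odd x} \<inter> {x\<in>E. odd x} = {}" using assms(3) unfolding sh_def by auto
  show "ev (sh K \<union> E) = ev K + ev E" unfolding ev_def e1
    using assms d1 by (subst card_Un_disjoint) (auto simp: card_image[OF i])
  show "od (sh K \<union> E) = od K + od E" unfolding od_def e2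
    using assms d2 by (subst card_Un_disjoint) (auto simp: card_image[OF i])
qed

lemma sh_inj: "sh A = sh B \<Longrightarrow> A = B"
  unfolding sh_def by (simp add: inj_image_eq_iff inj_on_def)

lemma sh_sub: "K \<in> indep n \<Longrightarrow> sh K \<subseteq> {2..2*n+2}"
  unfolding indep_def sh_def by auto

lemma sh_indep: assumes "K \<in> indep n" shows "sh K \<in> indep (n+2)"
proof -
  have K: "K \<subseteq> {..2*n}" "\<And>x. x\<in>K \<Longrightarrow> Suc x \<notin> K" "\<And>x. x\<in>K \<Longrightarrow> 2*n - x \<in> K"
    using assms unfolding indep_def by auto
  have "sh K \<subseteq> {..2*(n+2)}" using K(1) by (auto simp: sh_mem)
  moreover have "\<forall>y\<in>sh K. Suc y \<notin> sh K"
  proof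
    fix y assume "y \<in> sh K"
    then have "y - 2 \<in> K" "2 \<le> y" by (auto simp: sh_mem)
    moreover have "Suc y - 2 = Suc (y - 2)" using \<open>2 \<le> y\<close> by simp
    ultimately show "Suc y \<notin> sh K" using K(2) by (simp add: sh_mem)
  qed
  moreover have "\<forall>y\<in>sh K. 2*(n+2) - y \<in> sh K"
  proof
    fix y assume y: "y \<in> sh K"
    then have "y - 2 \<in> K" "2 \<le> y" by (auto simp: sh_mem)
    moreover have "y - 2 \<le> 2*n" using K(1) \<open>y - 2 \<in> K\<close> by auto
    ultimately have "2*(n+2) - y - 2 \<in> K" "2 \<le> 2*(n+2) - y" using K(3)[of "y-2"] by (auto simp: algebra_simps)
    then show "2*(n+2) - y \<in> sh K" by (simp add: sh_mem)
  qed
  ultimately show ?thesis unfolding indep_def by blast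
qed


lemma indep_decomp:
  assumes H: "H \<in> indep (n+2)"
  shows "{x. x+2 \<in> H \<and> x \<le> 2*n} \<in> indep n"
    and "H = sh {x. x+2 \<in> H \<and> x \<le> 2*n} \<union> (H \<inter> {0,1,2*n+3,2*n+4})"
    and "H \<inter> {0,1,2*n+3,2*n+4} \<in> {{}, {0,2*n+4}, {1,2*n+3}}"
proof -
  let ?K = "{x. x+2 \<in> H \<and> x \<le> 2*n}"
  have e: "2*(n+2) = 2*n+4" by simp
  have h1: "H \<subseteq> {..2*n+4}" and h2: "\<And>x. x\<in>H \<Longrightarrow> Suc x \<notin> H"
    and h3: "\<And>x. x\<in>H \<Longrightarrow> 2*n+4 - x \<in> H"
    using H unfolding indep_def e by blast+
  show "?K \<in> indep n"
  proof -
    have "\<forall>x\<in>?K. 2*n - x \<in> ?K"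
    proof
      fix x assume "x \<in> ?K"
      then have "x + 2 \<in> H" "x \<le> 2*n" by auto
      then have "2*n+4 - (x+2) \<in> H" using h3 by blast
      moreover have "2*n+4 - (x+2) = (2*n - x) + 2" using \<open>x \<le> 2*n\<close> by simp
      ultimately show "2*n - x \<in> ?K" by simp
    qed
    moreover have "\<forall>x\<in>?K. Suc x \<notin> ?K" using h2 by force
    ultimately show ?thesis unfolding indep_def by auto
  qed
  show "H = sh ?K \<union> (H \<inter> {0,1,2*n+3,2*n+4})"
  proof (intro equalityI subsetI)
    fix y assume y: "y \<in> H"
    show "y \<in> sh ?K \<union> (H \<inter> {0,1,2*n+3,2*n+4})"
    proof (cases "y \<in> {0,1,2*n+3,2*n+4}")
      case True then show ?thesis using y by blast
    next
      case False
      then have "2 \<le> y" "y - 2 \<le> 2*n" using h1 y by auto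
      moreover have "y - 2 + 2 = y" using \<open>2 \<le> y\<close> by simp
      ultimately show ?thesis using y by (simp add: sh_mem)
    qed
  next
    fix y assume "y \<in> sh ?K \<union> (H \<inter> {0,1,2*n+3,2*n+4})"
    then show "y \<in> H"
    proof
      assume "y \<in> sh ?K"
      then have "2 \<le> y" "y - 2 + 2 \<in> H" by (auto simp: sh_mem)
      moreover have "y - 2 + 2 = y" using \<open>2 \<le> y\<close> by arith
      ultimately show "y \<in> H" by metis
    qed auto
  qed
  have ar: "2*n+4 - 1 = 2*n+3" "2*n+4-(2*n+3) = 1" "2*n+4-0 = 2*n+4" "2*n+4-(2*n+4)=0" by simp_all
  have a: "0 \<in> H \<longleftrightarrow> 2*n+4 \<in> H" using h3[of 0] h3[of "2*n+4"] ar by metis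
  have b: "1 \<in> H \<longleftrightarrow> 2*n+3 \<in> H" using h3[of 1] h3[of "2*n+3"] ar by metis
  have c: "\<not> (0 \<in> H \<and> 1 \<in> H)" using h2[of 0] by auto
  show "H \<inter> {0,1,2*n+3,2*n+4} \<in> {{}, {0,2*n+4}, {1,2*n+3}}"
    using a b c by auto
qed

lemma piece:
  assumes E: "E \<subseteq> {0,1,2*n+3,2*n+4}" "finite E"
    and Q: "\<And>K. K \<in> indep n \<Longrightarrow> (sh K \<union> E \<in> indep (n+2) \<longleftrightarrow> Q K)"
  shows "card {H\<in>indep (n+2). H \<inter> {0,1,2*n+3,2*n+4} = E \<and> ev H = r \<and> od H = p}
       = card {K\<in>indep n. Q K \<and> ev K + ev E = r \<and> od K + od E = p}"
proof -
  let ?X = "{0,1,2*n+3,2*n+4}"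
  let ?L = "{H\<in>indep (n+2). H \<inter> ?X = E \<and> ev H = r \<and> od H = p}"
  let ?R = "{K\<in>indep n. Q K \<and> ev K + ev E = r \<and> od K + od E = p}"
  have disj: "K \<in> indep n \<Longrightarrow> sh K \<inter> ?X = {}" for K using sh_sub[of K n] by auto
  have disjE: "K \<in> indep n \<Longrightarrow> sh K \<inter> E = {}" for K using disj E by blast
  have inj: "inj_on (\<lambda>K. sh K \<union> E) ?R"
  proof (rule inj_onI)
    fix A B assume A: "A \<in> ?R" and B: "B \<in> ?R" and eq: "sh A \<union> E = sh B \<union> E"
    have "sh A = (sh A \<union> E) - E" using disjE[of A] A by auto
    also have "\<dots> = sh B" using eq disjE[of B] B by auto
    finally show "A = B" by (rule sh_inj)
  qed
  have "?L = (\<lambda>K. sh K \<union> E) ` ?R"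
  proof (intro equalityI subsetI)
    fix H assume H: "H \<in> ?L"
    let ?K = "{x. x+2 \<in> H \<and> x \<le> 2*n}"
    have K: "?K \<in> indep n" "H = sh ?K \<union> E" using indep_decomp[of H n] H by auto
    have "Q ?K" using Q[OF K(1)] K(2) H by auto
    moreover have "ev ?K + ev E = r" "od ?K + od E = p"
      using ev_sh_Un[OF indep_fin[OF K(1)] E(2) disjE[OF K(1)]] H K(2) by auto
    ultimately have "?K \<in> ?R" using K(1) by blast
    then show "H \<in> (\<lambda>K. sh K \<union> E) ` ?R" using K(2) by blast
  next
    fix H assume "H \<in> (\<lambda>K. sh K \<union> E) ` ?R"
    then obtain K where K: "K \<in> ?R" "H = sh K \<union> E" by blast
    have "H \<in> indep (n+2)" using Q[of K] K by auto
    moreover have "H \<inter> ?X = E" using K disj[of K] E by auto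
    moreover have "ev H = r" "od H = p"
      using ev_sh_Un[OF indep_fin[of K n] E(2) disjE[of K]] K by auto
    ultimately show "H \<in> ?L" by blast
  qed
  then show ?thesis using card_image[OF inj] by simp
qed


lemma indep_iff: "H \<in> indep m \<longleftrightarrow> H \<subseteq> {..2*m} \<and> (\<forall>x\<in>H. Suc x \<notin> H) \<and> (\<forall>x\<in>H. 2*m - x \<in> H)"
  unfolding indep_def by simp

lemma ins0: assumes K: "K \<in> indep n" shows "sh K \<union> {0, 2*n+4} \<in> indep (n+2)"
proof -
  have S: "sh K \<in> indep (n+2)" using sh_indep[OF K] .
  have sub: "sh K \<subseteq> {2..2*n+2}" using sh_sub[OF K] .
  have e: "2*(n+2) = 2*n+4" by simp
  show ?thesis unfolding indep_iff e
  proof (intro conjI ballI)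
    show "sh K \<union> {0, 2*n+4} \<subseteq> {..2*n+4}" using sub by auto
  next
    fix x assume x: "x \<in> sh K \<union> {0, 2*n+4}"
    show "Suc x \<notin> sh K \<union> {0, 2*n+4}"
    proof
      assume sx: "Suc x \<in> sh K \<union> {0, 2*n+4}"
      show False
      proof (cases "x \<in> sh K")
        case True
        then have "Suc x \<notin> sh K" using S unfolding indep_iff by blast
        then show False using sx True sub by auto
      next
        case False
        then show False using x sx sub by auto
      qed
    qed
    show "2*n+4 - x \<in> sh K \<union> {0, 2*n+4}"
    proof (cases "x \<in> sh K")
      case True
      then show ?thesis using S unfolding indep_iff e by blast
    next
      case False then show ?thesis using x by auto
    qed
  qed
qed

lemma ins1: assumes K: "K \<in> indep n" shows "sh K \<union> {1, 2*n+3} \<in> indep (n+2) \<longleftrightarrow> 0 \<notin> K"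
proof -
  have S: "sh K \<in> indep (n+2)" using sh_indep[OF K] .
  have sub: "sh K \<subseteq> {2..2*n+2}" using sh_sub[OF K] .
  have e: "2*(n+2) = 2*n+4" by simp
  have K2: "0 \<in> K \<longleftrightarrow> 2 \<in> sh K" by (simp add: sh_mem)
  have K3: "0 \<in> K \<longleftrightarrow> 2*n+2 \<in> sh K"
  proof -
    have a: "2*n+2 \<in> sh K \<longleftrightarrow> 2*n \<in> K" by (simp add: sh_mem)
    have all: "\<forall>x\<in>K. 2*n - x \<in> K" using K unfolding indep_iff by blast
    then have "0 \<in> K \<Longrightarrow> 2*n - 0 \<in> K" "2*n \<in> K \<Longrightarrow> 2*n - 2*n \<in> K" by blast+
    then have "0 \<in> K \<Longrightarrow> 2*n \<in> K" "2*n \<in> K \<Longrightarrow> 0 \<in> K" by simp_all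
    with a show ?thesis by blast
  qed
  show ?thesis
  proof
    assume A: "sh K \<union> {1, 2*n+3} \<in> indep (n+2)"
    have all: "\<forall>x\<in>sh K \<union> {1, 2*n+3}. Suc x \<notin> sh K \<union> {1, 2*n+3}" using A unfolding indep_iff by (elim conjE)
    have "(1::nat) \<in> sh K \<union> {1, 2*n+3}" by simp
    with all have "Suc 1 \<notin> sh K \<union> {1, 2*n+3}" by (rule bspec)
    then have "Suc 1 \<notin> sh K" by blast
    then have "2 \<notin> sh K" unfolding Suc_1 .
    then show "0 \<notin> K" using K2 by simp
  next
    assume z: "0 \<notin> K"
    show "sh K \<union> {1, 2*n+3} \<in> indep (n+2)" unfolding indep_iff e
    proof (intro conjI ballI)
      show "sh K \<union> {1, 2*n+3} \<subseteq> {..2*n+4}" using sub by auto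
    next
      fix x assume x: "x \<in> sh K \<union> {1, 2*n+3}"
      show "Suc x \<notin> sh K \<union> {1, 2*n+3}"
      proof
        assume sx: "Suc x \<in> sh K \<union> {1, 2*n+3}"
        show False
        proof (cases "x \<in> sh K")
          case True
          then have "Suc x \<notin> sh K" using S unfolding indep_iff by blast
          then have "Suc x = 1 \<or> Suc x = 2*n+3" using sx by simp
          moreover have "x \<ge> 2" using True sub by auto
          ultimately have "Suc x = 2*n+3" by simp
          then have "x = 2*n+2" by simp
          then show False using True K3 z by simp
        next
          case False
          then have "x = 1 \<or> x = 2*n+3" using x by auto
          moreover have "Suc x \<in> sh K" using sx \<open>x = 1 \<or> x = 2*n+3\<close> by auto
          moreover have "Suc x \<le> 2*n+2" using \<open>Suc x \<in> sh K\<close> sub by auto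
          ultimately have "x = 1" by auto
          then have "2 \<in> sh K" using \<open>Suc x \<in> sh K\<close> by (simp add: numeral_2_eq_2 del: One_nat_def)
          then show False using K2 z by simp
        qed
      qed
      show "2*n+4 - x \<in> sh K \<union> {1, 2*n+3}"
      proof (cases "x \<in> sh K")
        case True
        then show ?thesis using S unfolding indep_iff e by blast
      next
        case False then show ?thesis using x by auto
      qed
    qed
  qed
qed

definition Cs :: "nat \<Rightarrow> nat \<Rightarrow> nat \<Rightarrow> nat" where
  "Cs n r p = card {H\<in>indep n. ev H = r \<and> od H = p}"
definition Ds :: "nat \<Rightarrow> nat \<Rightarrow> nat \<Rightarrow> nat" where
  "Ds n r p = card {H\<in>indep n. 0 \<notin> H \<and> ev H = r \<and> od H = p}"

lemma indep_finite: "finite (indep n)"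
proof -
  have "indep n \<subseteq> Pow {..2*n}" unfolding indep_def by auto
  then show ?thesis using finite_subset by blast
qed

lemma ev_E: "ev {0, 2*n+4} = 2" "od {0, 2*n+4} = 0" "ev {1, 2*n+3} = 0" "od {1, 2*n+3} = 2" "ev {} = 0" "od {} = 0"
proof -
  have "{x\<in>{0, 2*n+4}. even x} = {0, 2*n+4}" by auto
  then show "ev {0, 2*n+4} = 2" unfolding ev_def by simp
  have "{x\<in>{0, 2*n+4}. odd x} = {}" by (auto simp: odd_pos)
  then show "od {0, 2*n+4} = 0" unfolding od_def by simp
  have "{x\<in>{1, 2*n+3}. odd x} = {1, 2*n+3}" by auto
  then show "od {1, 2*n+3} = 2" unfolding od_def by simp
  have "{x\<in>{1, 2*n+3}. even x} = {}" by auto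
  then show "ev {1, 2*n+3} = 0" unfolding ev_def by simp
qed (auto simp: ev_def od_def)

lemma sh_indep': "K \<in> indep n \<Longrightarrow> sh K \<in> indep (Suc (Suc n))"
  using sh_indep[of K n] by simp
lemma ins0': "K \<in> indep n \<Longrightarrow> insert 0 (insert (2*n+4) (sh K)) \<in> indep (Suc (Suc n))"
  using ins0[of K n] by simp
lemma ins1': "K \<in> indep n \<Longrightarrow> insert (Suc 0) (insert (2*n+3) (sh K)) \<in> indep (Suc (Suc n)) \<longleftrightarrow> 0 \<notin> K"
  using ins1[of K n] by simp

lemma pieces:
  fixes n r p :: nat
  defines "X \<equiv> {0,1,2*n+3,2*n+4}"
  defines "L \<equiv> \<lambda>E. {H\<in>indep (n+2). H \<inter> X = E \<and> ev H = r \<and> od H = p}"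
  shows "card (L {}) = Cs n r p"
    and "card (L {0,2*n+4}) = (if 2 \<le> r then Cs n (r-2) p else 0)"
    and "card (L {1,2*n+3}) = (if 2 \<le> p then Ds n r (p-2) else 0)"
proof -
  have "card (L {}) = card {K\<in>indep n. True \<and> ev K + ev {} = r \<and> od K + od {} = p}"
    unfolding L_def X_def by (rule piece) (auto intro: sh_indep')
  then show "card (L {}) = Cs n r p" by (simp add: ev_E Cs_def)
  have "card (L {0,2*n+4}) = card {K\<in>indep n. True \<and> ev K + ev {0,2*n+4} = r \<and> od K + od {0,2*n+4} = p}"
    unfolding L_def X_def by (rule piece) (auto intro: ins0')
  also have "\<dots> = (if 2 \<le> r then Cs n (r-2) p else 0)"
  proof (cases "2 \<le> r")
    case True
    then have "{K\<in>indep n. True \<and> ev K + ev {0,2*n+4} = r \<and> od K + od {0,2*n+4} = p}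
        = {K\<in>indep n. ev K = r - 2 \<and> od K = p}" by (auto simp: ev_E)
    then show ?thesis using True by (simp add: Cs_def)
  next
    case False
    then have e: "{K\<in>indep n. True \<and> ev K + ev {0,2*n+4} = r \<and> od K + od {0,2*n+4} = p} = {}"
      unfolding ev_E by auto
    show ?thesis unfolding e using False by simp
  qed
  finally show "card (L {0,2*n+4}) = (if 2 \<le> r then Cs n (r-2) p else 0)" .
  have "card (L {1,2*n+3}) = card {K\<in>indep n. 0 \<notin> K \<and> ev K + ev {1,2*n+3} = r \<and> od K + od {1,2*n+3} = p}"
    unfolding L_def X_def by (rule piece) (auto simp: ins1')
  also have "\<dots> = (if 2 \<le> p then Ds n r (p-2) else 0)"
  proof (cases "2 \<le> p")
    case True
    then have "{K\<in>indep n. 0 \<notin> K \<and> ev K + ev {1,2*n+3} = r \<and> od K + od {1,2*n+3} = p}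
        = {K\<in>indep n. 0 \<notin> K \<and> ev K = r \<and> od K = p - 2}" unfolding ev_E by auto
    then show ?thesis using True by (simp add: Ds_def)
  next
    case False
    then have e: "{K\<in>indep n. 0 \<notin> K \<and> ev K + ev {1,2*n+3} = r \<and> od K + od {1,2*n+3} = p} = {}"
      unfolding ev_E by auto
    show ?thesis unfolding e using False by simp
  qed
  finally show "card (L {1,2*n+3}) = (if 2 \<le> p then Ds n r (p-2) else 0)" .
qed

lemma three_union:
  assumes "\<And>H. H \<in> A \<Longrightarrow> f H = a \<or> f H = b \<or> f H = c"
  shows "{H\<in>A. P H} = {H\<in>A. f H = a \<and> P H} \<union> {H\<in>A. f H = b \<and> P H} \<union> {H\<in>A. f H = c \<and> P H}"
  using assms by blast

lemma two_union:
  assumes "\<And>H. H \<in> A \<Longrightarrow> f H = a \<or> f H = b \<or> f H = c" "b \<noteq> a" "b \<noteq> c"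
  shows "{H\<in>A. f H \<noteq> b \<and> P H} = {H\<in>A. f H = a \<and> P H} \<union> {H\<in>A. f H = c \<and> P H}"
  using assms by blast

lemma card3:
  assumes "finite A" "a \<noteq> b" "a \<noteq> c" "b \<noteq> c"
  shows "card ({H\<in>A. f H = a \<and> P H} \<union> {H\<in>A. f H = b \<and> P H} \<union> {H\<in>A. f H = c \<and> P H})
    = card {H\<in>A. f H = a \<and> P H} + card {H\<in>A. f H = b \<and> P H} + card {H\<in>A. f H = c \<and> P H}"
proof -
  have f: "finite {H\<in>A. f H = x \<and> P H}" for x using assms(1) by simp
  show ?thesis
    apply (subst card_Un_disjoint)
       apply (use f in simp)
      apply (use f in simp)
     apply (use assms in blast)
    apply (subst card_Un_disjoint)
       apply (use f in simp)
      apply (use f in simp)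
     apply (use assms in blast)
    apply simp
    done
qed

lemma card2:
  assumes "finite A" "a \<noteq> c"
  shows "card ({H\<in>A. f H = a \<and> P H} \<union> {H\<in>A. f H = c \<and> P H})
    = card {H\<in>A. f H = a \<and> P H} + card {H\<in>A. f H = c \<and> P H}"
  by (rule card_Un_disjoint) (use assms in auto)

definition bd :: "nat \<Rightarrow> nat set \<Rightarrow> nat set" where
  "bd n H = H \<inter> {0,1,2*n+3,2*n+4}"

lemma Cs_rec: "Cs (n+2) r p = Cs n r p + (if 2 \<le> r then Cs n (r-2) p else 0) + (if 2 \<le> p then Ds n r (p-2) else 0)"
  and Ds_rec: "Ds (n+2) r p = Cs n r p + (if 2 \<le> p then Ds n r (p-2) else 0)"
proof -
  let ?L = "\<lambda>E. {H\<in>indep (n+2). bd n H = E \<and> (ev H = r \<and> od H = p)}"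
  have LL: "?L E = {H\<in>indep (n+2). H \<inter> {0,1,2*n+3,2*n+4} = E \<and> ev H = r \<and> od H = p}" for E
    unfolding bd_def by simp
  have dec: "H \<in> indep (n+2) \<Longrightarrow> bd n H = {} \<or> bd n H = {0,2*n+4} \<or> bd n H = {1,2*n+3}" for H
    using indep_decomp(3)[of H n] unfolding bd_def by (simp only: insert_iff empty_iff simp_thms)
  have P1: "card (?L {}) = Cs n r p" unfolding LL by (rule pieces(1))
  have P2: "card (?L {0,2*n+4}) = (if 2 \<le> r then Cs n (r-2) p else 0)" unfolding LL by (rule pieces(2))
  have P3: "card (?L {1,2*n+3}) = (if 2 \<le> p then Ds n r (p-2) else 0)" unfolding LL by (rule pieces(3))
  have ne: "({}::nat set) \<noteq> {0,2*n+4}" "({}::nat set) \<noteq> {1,2*n+3}" "{0,2*n+4} \<noteq> ({1,2*n+3}::nat set)" by auto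
  have "{H\<in>indep (n+2). ev H = r \<and> od H = p} = ?L {} \<union> ?L {0,2*n+4} \<union> ?L {1,2*n+3}"
    by (rule three_union[where f="bd n"]) (rule dec)
  moreover have "card (?L {} \<union> ?L {0,2*n+4} \<union> ?L {1,2*n+3}) = card (?L {}) + card (?L {0,2*n+4}) + card (?L {1,2*n+3})"
    by (rule card3[OF indep_finite ne])
  ultimately have "Cs (n+2) r p = card (?L {}) + card (?L {0,2*n+4}) + card (?L {1,2*n+3})"
    unfolding Cs_def by (simp only:)
  then show "Cs (n+2) r p = Cs n r p + (if 2 \<le> r then Cs n (r-2) p else 0) + (if 2 \<le> p then Ds n r (p-2) else 0)"
    unfolding P1 P2 P3 .
  have z: "0 \<notin> H \<longleftrightarrow> bd n H \<noteq> {0,2*n+4}" if H: "H \<in> indep (n+2)" for H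
  proof -
    have "0 \<in> H \<longleftrightarrow> 0 \<in> bd n H" unfolding bd_def by simp
    with dec[OF H] show ?thesis by (elim disjE) auto
  qed
  have "{H\<in>indep (n+2). 0 \<notin> H \<and> ev H = r \<and> od H = p} = {H\<in>indep (n+2). bd n H \<noteq> {0,2*n+4} \<and> (ev H = r \<and> od H = p)}"
  proof (rule Collect_cong)
    fix H show "(H \<in> indep (n+2) \<and> 0 \<notin> H \<and> ev H = r \<and> od H = p) = (H \<in> indep (n+2) \<and> bd n H \<noteq> {0,2*n+4} \<and> (ev H = r \<and> od H = p))"
    proof (cases "H \<in> indep (n+2)")
      case True show ?thesis using z[OF True] True by argo
    next
      case False show ?thesis using False by argo
    qed
  qed
  also have "\<dots> = ?L {} \<union> ?L {1,2*n+3}"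
    by (rule two_union[where f="bd n", OF dec ne(1)[symmetric] ne(3)])
  finally have "{H\<in>indep (n+2). 0 \<notin> H \<and> ev H = r \<and> od H = p} = ?L {} \<union> ?L {1,2*n+3}" .
  moreover have "card (?L {} \<union> ?L {1,2*n+3}) = card (?L {}) + card (?L {1,2*n+3})"
    by (rule card2[OF indep_finite ne(2)])
  ultimately have "Ds (n+2) r p = card (?L {}) + card (?L {1,2*n+3})"
    unfolding Ds_def by (simp only:)
  then show "Ds (n+2) r p = Cs n r p + (if 2 \<le> p then Ds n r (p-2) else 0)"
    unfolding P1 P3 .
qed

lemma gg_gt: "m < k \<Longrightarrow> gg m k = 0"
  unfolding gg_def by (auto elim!: evenE oddE simp: binomial_eq_0)

lemma gg_self: "gg m m = 1"
  unfolding gg_def by simp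

lemma gg_0: "gg 0 p = (if p = 0 then 1 else 0)"
  unfolding gg_def by (auto elim!: evenE oddE)

lemma gg_1: "gg 1 p = (if p \<le> 1 then 1 else 0)"
  unfolding gg_def by (auto simp: binomial_eq_0 )

lemma gg_1': "gg (Suc 0) p = (if p \<le> 1 then 1 else 0)"
  using gg_1 by simp

lemma gg_J: "gg (m+2) p = gg m p + (if 2 \<le> p then gg m (p-2) else 0)"
proof -
  obtain M where M: "m = 2*M \<or> m = 2*M+1" by (metis oddE evenE)
  obtain P where P: "p = 2*P \<or> p = 2*P+1" by (metis oddE evenE)
  from M P show ?thesis
    by (auto simp: gg_def) (cases P; simp)+
qed

lemma card2e: "a \<noteq> b \<Longrightarrow> card {H\<in>{a,b}. P H} = (if P a then 1 else 0) + (if P b then 1 else 0)"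
proof -
  assume "a \<noteq> b"
  have "{H\<in>{a,b}. P H} = (if P a then {a} else {}) \<union> (if P b then {b} else {})" by auto
  then show ?thesis using \<open>a \<noteq> b\<close> by simp
qed

lemma card3e: "a \<noteq> b \<Longrightarrow> a \<noteq> c \<Longrightarrow> b \<noteq> c \<Longrightarrow>
   card {H\<in>{a,b,c}. P H} = (if P a then 1 else 0) + (if P b then 1 else 0) + (if P c then 1 else 0)"
proof -
  assume "a \<noteq> b" "a \<noteq> c" "b \<noteq> c"
  have "{H\<in>{a,b,c}. P H} = (if P a then {a} else {}) \<union> (if P b then {b} else {}) \<union> (if P c then {c} else {})" by auto
  then show ?thesis using \<open>a \<noteq> b\<close> \<open>a \<noteq> c\<close> \<open>b \<noteq> c\<close> by (simp add: card_insert_if)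
qed

lemma indep0: "indep 0 = {{}, {0}}"
proof (intro equalityI subsetI)
  fix H assume "H \<in> indep 0"
  then have "H \<subseteq> {0}" unfolding indep_def by auto
  then have "H = {} \<or> H = {0}" by (rule subset_singletonD)
  then show "H \<in> {{}, {0}}" by blast
next
  fix H assume "H \<in> {{}, {0::nat}}"
  then show "H \<in> indep 0" unfolding indep_def by auto
qed

lemma indep1: "indep 1 = {{}, {0,2}, {1}}"
proof (intro equalityI subsetI)
  fix H assume H: "H \<in> indep 1"
  then have s1: "H \<subseteq> {0,1,2}" unfolding indep_def by auto
  have s2: "x\<in>H \<Longrightarrow> Suc x \<notin> H" for x using H unfolding indep_def by blast
  have s3: "x\<in>H \<Longrightarrow> 2 - x \<in> H" for x using H unfolding indep_def by auto
  have a: "0 \<in> H \<longleftrightarrow> 2 \<in> H" using s3[of 0] s3[of 2] by auto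
  have b: "0 \<in> H \<Longrightarrow> 1 \<notin> H" using s2[of 0] by simp
  show "H \<in> {{}, {0,2}, {1}}"
  proof (cases "0 \<in> H")
    case True
    then have "H = {0,2}" using a b s1 by blast
    then show ?thesis by simp
  next
    case False
    show ?thesis
    proof (cases "1 \<in> H")
      case True
      then have "H = {1}" using a False s1 by blast
      then show ?thesis by simp
    next
      case F2: False
      then have "H = {}" using a False s1 by blast
      then show ?thesis by simp
    qed
  qed
next
  fix H assume "H \<in> {{}, {0::nat,2}, {1}}"
  then show "H \<in> indep 1" unfolding indep_def by auto
qed

lemma evod_small: "ev {} = 0" "od {} = 0" "ev {0} = 1" "od {0} = 0" "ev {0,2} = 2" "od {0,2} = 0"
  "ev {1} = 0" "od {1} = 1"
proof -
  have "{x\<in>{0::nat,2}. even x} = {0,2}" by auto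
  then show "ev {0,2} = 2" unfolding ev_def by simp
  have "{x\<in>{0::nat,2}. odd x} = {}" by (auto elim: oddE)
  then show "od {0,2} = 0" unfolding od_def by simp
  have "{x\<in>{0::nat}. odd x} = {}" by (auto elim: oddE)
  then show "od {0} = 0" unfolding od_def by simp
  have "{x\<in>{0::nat}. even x} = {0}" by auto
  then show "ev {0} = 1" unfolding ev_def by simp
  have "{x\<in>{1::nat}. odd x} = {1}" by auto
  then show "od {1} = 1" unfolding od_def by simp
qed (auto simp: ev_def od_def)

lemma evod_small': "ev {Suc 0} = 0" "od {Suc 0} = 1"
  using evod_small by simp_all

lemma Cs0: "Cs 0 r p = gg (0 - r) p * gg (0 + 1 - p) r"
  and Ds0: "Ds 0 r p = gg (0 - 1 - p) r * gg (0 - r) p"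
proof -
  have "Cs 0 r p = (if ev {} = r \<and> od {} = p then 1 else 0) + (if ev {0} = r \<and> od {0} = p then 1 else 0)"
    unfolding Cs_def indep0 by (rule card2e) simp
  also have "\<dots> = (if 0 = r \<and> 0 = p then 1 else 0) + (if 1 = r \<and> 0 = p then 1 else 0)"
    by (simp only: evod_small)
  also have "\<dots> = gg (0 - r) p * gg (0 + 1 - p) r"
  proof (cases "p = 0")
    case True
    consider "r = 0" | "r = 1" | "r \<ge> 2" by linarith
    then show ?thesis using True by cases (simp_all add: gg_0 gg_1')
  next
    case False then show ?thesis by (simp add: gg_0)
  qed
  finally show "Cs 0 r p = gg (0 - r) p * gg (0 + 1 - p) r" .
  have "{H\<in>{{}, {0::nat}}. 0 \<notin> H \<and> ev H = r \<and> od H = p} = {H\<in>{{}}. ev H = r \<and> od H = p}" by auto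
  then have "Ds 0 r p = card {H\<in>{{}}. ev H = r \<and> od H = p}"
    unfolding Ds_def indep0 by simp
  also have "\<dots> = (if ev {} = r \<and> od {} = p then 1 else 0)"
  proof -
    have "{H\<in>{{}::nat set}. ev H = r \<and> od H = p} = (if ev {} = r \<and> od {} = p then {{}} else {})" by auto
    then show ?thesis by simp
  qed
  also have "\<dots> = (if 0 = r \<and> 0 = p then 1 else 0)"
    by (simp only: evod_small)
  also have "\<dots> = gg (0 - 1 - p) r * gg (0 - r) p"
    by (simp add: gg_0)
  finally show "Ds 0 r p = gg (0 - 1 - p) r * gg (0 - r) p" .
qed

lemma Cs1: "Cs 1 r p = gg (1 - r) p * gg (1 + 1 - p) r"
  and Ds1: "Ds 1 r p = gg (1 - 1 - p) r * gg (1 - r) p"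
proof -
  have "Cs 1 r p = (if r = 0 \<and> p = 0 then 1 else 0) + (if r = 2 \<and> p = 0 then 1 else 0) + (if r = 0 \<and> p = 1 then 1 else 0)"
    unfolding Cs_def indep1 by (subst card3e) (auto simp: evod_small evod_small')
  moreover have "gg (1 - r) p * gg (1 + 1 - p) r = (if r = 0 \<and> p = 0 then 1 else 0) + (if r = 2 \<and> p = 0 then 1 else 0) + (if r = 0 \<and> p = 1 then 1 else 0)"
  proof -
    consider "r = 0" | "r = 1" | "r \<ge> 2" by linarith
    then show ?thesis
    proof cases
      case 1 then show ?thesis
        by (cases "p = 0"; cases "p = 1") (auto simp: gg_1 gg_self gg_0 gg_gt gg_def)
    next
      case 2 then show ?thesis
        by (cases "p = 0"; cases "p = 1") (auto simp: gg_1 gg_self gg_0 gg_gt gg_def)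
    next
      case 3 then have "1 - r = 0" by simp
      then show ?thesis using 3 by (cases "p = 0") (auto simp: gg_0 gg_def)
    qed
  qed
  ultimately show "Cs 1 r p = gg (1 - r) p * gg (1 + 1 - p) r" by simp
  have "{H\<in>{{}, {0::nat,2}, {1}}. 0 \<notin> H \<and> ev H = r \<and> od H = p} = {H\<in>{{}, {1}}. ev H = r \<and> od H = p}" by auto
  then have "Ds 1 r p = (if r = 0 \<and> p = 0 then 1 else 0) + (if r = 0 \<and> p = 1 then 1 else 0)"
    unfolding Ds_def indep1 by (simp only:) (subst card2e, auto simp: evod_small evod_small')
  then show "Ds 1 r p = gg (1 - 1 - p) r * gg (1 - r) p"
    by (cases "r = 0") (auto simp: gg_0 gg_1 gg_1')
qed

lemma I2: "gg (n+1-p) r * gg (n+2-r) p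
   = gg (n-r) p * gg (n+1-p) r + (if 2 \<le> p then gg (n-1-(p-2)) r * gg (n-r) (p-2) else 0)"
proof -
  have e: "2 \<le> p \<Longrightarrow> n-1-(p-2) = n+1-p" by simp
  consider "r \<le> n" | "r = n+1" | "r \<ge> n+2" by linarith
  then show ?thesis
  proof cases
    case 1
    then have "n+2-r = (n-r)+2" by simp
    then have "gg (n+2-r) p = gg (n-r) p + (if 2 \<le> p then gg (n-r) (p-2) else 0)" using gg_J by simp
    then show ?thesis using e by (simp add: algebra_simps)
  next
    case 2
    show ?thesis
    proof (cases "p = 0")
      case True then show ?thesis using 2 by (simp add: gg_self gg_0 gg_1 gg_1')
    next
      case False
      then have z: "gg (n+1-p) r = 0" using 2 by (intro gg_gt) simp
      show ?thesis using z e by simp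
    qed
  next
    case 3
    then have z: "gg (n+1-p) r = 0" by (intro gg_gt) simp
    show ?thesis using z e by simp
  qed
qed

lemma I1: "gg (n+2-r) p * gg (n+3-p) r
   = gg (n-r) p * gg (n+1-p) r + (if 2 \<le> r then gg (n-(r-2)) p * gg (n+1-p) (r-2) else 0)
     + (if 2 \<le> p then gg (n-1-(p-2)) r * gg (n-r) (p-2) else 0)"
proof (cases "p \<le> n+1")
  case True
  then have "n+3-p = (n+1-p)+2" by simp
  then have J: "gg (n+3-p) r = gg (n+1-p) r + (if 2 \<le> r then gg (n+1-p) (r-2) else 0)" using gg_J by simp
  have er: "2 \<le> r \<Longrightarrow> n-(r-2) = n+2-r" by simp
  have "gg (n+2-r) p * gg (n+3-p) r = gg (n+1-p) r * gg (n+2-r) p + (if 2 \<le> r then gg (n+2-r) p * gg (n+1-p) (r-2) else 0)"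
    unfolding J by (simp add: algebra_simps)
  then show ?thesis unfolding I2 using er by simp
next
  case False
  show ?thesis
  proof (cases "r = 0 \<and> p = n+2")
    case True
    then show ?thesis by (simp add: gg_self gg_1 gg_1' gg_0 gg_gt)
  next
    case F2: False
    have a: "gg (n+2-r) p = 0" using False F2 by (intro gg_gt) auto
    have b: "gg (n-r) p = 0" using False by (intro gg_gt) auto
    have c: "gg (n-1-(p-2)) r * gg (n-r) (p-2) = 0"
    proof (cases "n - r < p - 2")
      case True then show ?thesis by (simp add: gg_gt)
    next
      case F3: False
      then have "r > 0" "n = 0" using False F2 by auto
      then show ?thesis by (simp add: gg_gt)
    qed
    have a': "gg (n-(r-2)) p = 0" using False F2 by (intro gg_gt) auto
    show ?thesis by (simp only: a a' b c mult_zero_left mult_zero_right if_cancel add_0)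
  qed
qed

lemma closed_form: "Cs n r p = gg (n - r) p * gg (n + 1 - p) r \<and> Ds n r p = gg (n - 1 - p) r * gg (n - r) p"
proof (induction n arbitrary: r p rule: less_induct)
  case (less n)
  consider "n = 0" | "n = 1" | m where "n = m + 2" by (metis add_2_eq_Suc' less_2_cases not_less_less_Suc_eq nat_less_le one_add_one plus_1_eq_Suc less_imp_Suc_add le_add2 add.commute le_less_Suc_eq numeral_2_eq_2 nat_le_iff_add)
  then show ?case
  proof cases
    case 1 then show ?thesis using Cs0 Ds0 by simp
  next
    case 2 then show ?thesis using Cs1 Ds1 by simp
  next
    case 3
    have IH: "Cs m r' p' = gg (m - r') p' * gg (m + 1 - p') r'" "Ds m r' p' = gg (m - 1 - p') r' * gg (m - r') p'" for r' p'
      using less.IH[of m r' p'] 3 by auto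
    have e: "m + 2 + 1 - p = m + 3 - p" "m + 2 - 1 - p = m + 1 - p" by simp_all
    have "Cs n r p = gg (n - r) p * gg (n + 1 - p) r"
      unfolding 3 Cs_rec IH e I1 by (simp add: algebra_simps)
    moreover have "Ds n r p = gg (n - 1 - p) r * gg (n - r) p"
      unfolding 3 Ds_rec IH e I2 by (simp add: algebra_simps)
    ultimately show ?thesis by simp
  qed
qed

lemma mem_hedge: "(u,v) \<in> hedge x y \<longleftrightarrow> v = y \<and> (u = x \<or> u = x+1)"
  unfolding hedge_def by auto

lemma mem_vedge: "(u,v) \<in> vedge x \<longleftrightarrow> u = x \<and> (v = 0 \<or> v = 1)"
  unfolding vedge_def by auto

lemma hedge_eq[simp]: "hedge a y = hedge b z \<longleftrightarrow> a = b \<and> y = z"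
proof
  assume h: "hedge a y = hedge b z"
  have "(a,y) \<in> hedge b z" "(a+1,y) \<in> hedge b z" using h by (simp_all add: mem_hedge flip: h)
  then show "a = b \<and> y = z" unfolding mem_hedge by auto
qed simp

lemma vedge_eq[simp]: "vedge a = vedge b \<longleftrightarrow> a = b"
proof
  assume h: "vedge a = vedge b"
  have "(a,0) \<in> vedge a" by (simp add: mem_vedge)
  then have "(a,0) \<in> vedge b" using h by simp
  then show "a = b" unfolding mem_vedge by simp
qed simp

lemma hv_ne1[simp]: "hedge a y \<noteq> vedge b"
proof
  assume h: "hedge a y = vedge b"
  have "(a,y) \<in> hedge a y" "(a+1,y) \<in> hedge a y" by (simp_all add: mem_hedge)
  then have "(a,y) \<in> vedge b" "(a+1,y) \<in> vedge b" using h by simp_all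
  then show False unfolding mem_vedge by simp
qed

lemma hv_ne2[simp]: "vedge b \<noteq> hedge a y"
  using hv_ne1[of a y b] by (rule not_sym)

lemma edges_at:
  assumes "e \<in> edges n" "(x,y) \<in> e"
  shows "e = hedge x y \<or> (0 < x \<and> e = hedge (x-1) y) \<or> e = vedge x"
proof -
  from assms(1) consider a z where "e = hedge a z" | a where "e = vedge a"
    unfolding edges_def by blast
  then show ?thesis
  proof cases
    case 1
    then have "z = y" "x = a \<or> x = a+1" using assms(2) by (auto simp: mem_hedge)
    then show ?thesis using 1 by auto
  next
    case 2
    then show ?thesis using assms(2) by (auto simp: mem_vedge)
  qed
qed

lemma pm_unique:
  assumes "perfect_matching n P" "v \<in> verts n" "e \<in> P" "e' \<in> P" "v \<in> e" "v \<in> e'"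
  shows "e = e'"
  using assms unfolding perfect_matching_def by blast

lemma pm_exists:
  assumes "perfect_matching n P" "v \<in> verts n"
  shows "\<exists>e\<in>P. v \<in> e"
  using assms unfolding perfect_matching_def by blast

lemma pm_edges: "perfect_matching n P \<Longrightarrow> e \<in> P \<Longrightarrow> e \<in> edges n"
  unfolding perfect_matching_def by blast

lemma verts_iff[simp]: "(x,y) \<in> verts n \<longleftrightarrow> x \<le> 2*n+1 \<and> y \<le> 1"
  unfolding verts_def by simp

lemma hedge_in_edges: "hedge x y \<in> edges n \<longleftrightarrow> x \<le> 2*n \<and> y \<le> 1"
  unfolding edges_def by auto

lemma vedge_in_edges: "vedge x \<in> edges n \<longleftrightarrow> x \<le> 2*n+1"
  unfolding edges_def by auto

lemma pm_pair:
  assumes pm: "perfect_matching n P" and y: "y \<le> 1" and h: "hedge x y \<in> P"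
  shows "hedge x (1 - y) \<in> P"
  using h y
proof (induction x arbitrary: y rule: less_induct)
  case (less x)
  have x: "x \<le> 2*n" using pm_edges[OF pm less.prems(1)] by (simp add: hedge_in_edges)
  let ?z = "1 - y"
  have z: "?z \<le> 1" "1 - ?z = y" using less.prems(2) by auto
  show ?case
  proof (rule ccontr)
    assume nz: "hedge x ?z \<notin> P"
    obtain e where e: "e \<in> P" "(x, ?z) \<in> e" using pm_exists[OF pm, of "(x,?z)"] x z by auto
    have "e = hedge x ?z \<or> (0 < x \<and> e = hedge (x-1) ?z) \<or> e = vedge x"
      using edges_at[OF pm_edges[OF pm e(1)] e(2)] .
    then show False
    proof (elim disjE conjE)
      assume "e = hedge x ?z" then show False using nz e by simp
    next
      assume "e = vedge x"
      then have "(x, y) \<in> e" using less.prems(2) by (auto simp: mem_vedge)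
      moreover have "(x,y) \<in> hedge x y" by (simp add: mem_hedge)
      ultimately have "e = hedge x y" using pm_unique[OF pm, of "(x,y)" e "hedge x y"] e less.prems x by simp
      then show False using \<open>e = vedge x\<close> by simp
    next
      assume x0: "0 < x" and ee: "e = hedge (x-1) ?z"
      have "hedge (x-1) (1 - ?z) \<in> P" using less.IH[of "x-1" ?z] x0 ee e z by simp
      then have "hedge (x-1) y \<in> P" using z by simp
      moreover have "(x,y) \<in> hedge (x-1) y" "(x,y) \<in> hedge x y" using x0 by (auto simp: mem_hedge)
      moreover have vx: "(x,y) \<in> verts n" using x less.prems by simp
      ultimately have "hedge (x-1) y = hedge x y"
        using pm_unique[OF pm vx] less.prems(1) by blast
      then show False using x0 by simp
    qed
  qed
qed

definition cov :: "nat set \<Rightarrow> nat \<Rightarrow> bool" where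
  "cov H x \<longleftrightarrow> x \<in> H \<or> (0 < x \<and> x - 1 \<in> H)"

definition MM :: "nat \<Rightarrow> nat set \<Rightarrow> edge set" where
  "MM n H = {hedge x y | x y. x \<in> H \<and> y \<le> 1} \<union> {vedge x | x. x \<le> 2*n+1 \<and> \<not> cov H x}"

definition Hof :: "edge set \<Rightarrow> nat set" where
  "Hof P = {x. hedge x 0 \<in> P}"

definition good :: "nat \<Rightarrow> nat set \<Rightarrow> bool" where
  "good n H \<longleftrightarrow> H \<subseteq> {..2*n} \<and> (\<forall>x\<in>H. Suc x \<notin> H)"

lemma hedge_in_MM: "hedge x y \<in> MM n H \<longleftrightarrow> x \<in> H \<and> y \<le> 1"
  unfolding MM_def by auto

lemma vedge_in_MM: "vedge x \<in> MM n H \<longleftrightarrow> x \<le> 2*n+1 \<and> \<not> cov H x"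
  unfolding MM_def by auto

lemma Hof_MM: "Hof (MM n H) = H"
  unfolding Hof_def by (simp add: hedge_in_MM)

lemma MM_sub: "good n H \<Longrightarrow> MM n H \<subseteq> edges n"
  unfolding MM_def good_def by (auto simp: hedge_in_edges vedge_in_edges)

lemma MM_at:
  assumes g: "good n H" and v: "(x,y) \<in> verts n"
  shows "e \<in> MM n H \<and> (x,y) \<in> e \<longleftrightarrow>
     e = (if x \<in> H then hedge x y else if 0 < x \<and> x - 1 \<in> H then hedge (x-1) y else vedge x)"
proof -
  have y: "y \<le> 1" "x \<le> 2*n+1" using v by auto
  have adj: "x \<in> H \<Longrightarrow> 0 < x \<Longrightarrow> x - 1 \<notin> H"
  proof
    assume "x \<in> H" "0 < x" "x - 1 \<in> H"
    then have "Suc (x-1) \<notin> H" using g unfolding good_def by blast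
    then show False using \<open>x \<in> H\<close> \<open>0 < x\<close> by simp
  qed
  show ?thesis
  proof
    assume A: "e \<in> MM n H \<and> (x,y) \<in> e"
    then have "e = hedge x y \<or> (0 < x \<and> e = hedge (x-1) y) \<or> e = vedge x"
      using edges_at[of e n x y] MM_sub[OF g] by blast
    then show "e = (if x \<in> H then hedge x y else if 0 < x \<and> x - 1 \<in> H then hedge (x-1) y else vedge x)"
    proof (elim disjE conjE)
      assume "e = hedge x y" then show ?thesis using A adj by (auto simp: hedge_in_MM)
    next
      assume "0 < x" "e = hedge (x-1) y"
      then have "x - 1 \<in> H" using A by (simp add: hedge_in_MM)
      then show ?thesis using \<open>0 < x\<close> \<open>e = hedge (x-1) y\<close> adj by auto
    next
      assume "e = vedge x"
      then have "\<not> cov H x" using A by (simp add: vedge_in_MM)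
      then show ?thesis using \<open>e = vedge x\<close> unfolding cov_def by auto
    qed
  next
    assume B: "e = (if x \<in> H then hedge x y else if 0 < x \<and> x - 1 \<in> H then hedge (x-1) y else vedge x)"
    show "e \<in> MM n H \<and> (x,y) \<in> e"
    proof (cases "x \<in> H")
      case True then show ?thesis using B y by (simp add: hedge_in_MM mem_hedge)
    next
      case False
      show ?thesis
      proof (cases "0 < x \<and> x - 1 \<in> H")
        case True then show ?thesis using B y False by (simp add: hedge_in_MM mem_hedge)
      next
        case F2: False
        then have "\<not> cov H x" using False unfolding cov_def by blast
        then show ?thesis using B y False F2 by (auto simp: vedge_in_MM mem_vedge)
      qed
    qed
  qed
qed

lemma MM_pm: assumes g: "good n H" shows "perfect_matching n (MM n H)"
  unfolding perfect_matching_def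
proof (intro conjI ballI)
  show "MM n H \<subseteq> edges n" using MM_sub[OF g] .
next
  fix v assume v: "v \<in> verts n"
  obtain x y where xy: "v = (x,y)" by (cases v)
  have iff: "\<And>e. e \<in> MM n H \<and> (x,y) \<in> e \<longleftrightarrow>
     e = (if x \<in> H then hedge x y else if 0 < x \<and> x - 1 \<in> H then hedge (x-1) y else vedge x)"
    by (rule MM_at[OF g v[unfolded xy]])
  show "\<exists>!e. e \<in> MM n H \<and> v \<in> e"
    unfolding xy
    by (rule ex1I[where a="if x \<in> H then hedge x y else if 0 < x \<and> x - 1 \<in> H then hedge (x-1) y else vedge x"])
       (simp_all only: iff)
qed

lemma pm_good: assumes pm: "perfect_matching n P" shows "good n (Hof P)"
  unfolding good_def
proof (intro conjI ballI subsetI)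
  fix x assume "x \<in> Hof P"
  then have "hedge x 0 \<in> P" unfolding Hof_def by simp
  then show "x \<in> {..2*n}" using pm_edges[OF pm \<open>hedge x 0 \<in> P\<close>] by (simp add: hedge_in_edges)
next
  fix x assume x: "x \<in> Hof P"
  show "Suc x \<notin> Hof P"
  proof
    assume sx: "Suc x \<in> Hof P"
    have h1: "hedge x 0 \<in> P" "hedge (Suc x) 0 \<in> P" using x sx unfolding Hof_def by simp_all
    have "Suc x \<le> 2*n" using pm_edges[OF pm h1(2)] by (simp add: hedge_in_edges)
    then have vv: "(Suc x, 0) \<in> verts n" by simp
    have "(Suc x, 0) \<in> hedge x 0" "(Suc x, 0) \<in> hedge (Suc x) 0" by (simp_all add: mem_hedge)
    then have "hedge x 0 = hedge (Suc x) 0" using pm_unique[OF pm vv] h1 by blast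
    then show False by simp
  qed
qed

lemma pm_MM: assumes pm: "perfect_matching n P" shows "P = MM n (Hof P)"
proof (intro equalityI subsetI)
  fix e assume e: "e \<in> P"
  have "e \<in> edges n" using pm_edges[OF pm e] .
  then consider x y where "e = hedge x y" "x \<le> 2*n" "y \<le> 1" | x where "e = vedge x" "x \<le> 2*n+1"
    unfolding edges_def by blast
  then show "e \<in> MM n (Hof P)"
  proof cases
    case 1
    have "hedge x 0 \<in> P"
    proof (cases "y = 0")
      case True then show ?thesis using e 1 by simp
    next
      case False then have "y = 1" using 1 by simp
      then show ?thesis using pm_pair[OF pm, of y x] e 1 by simp
    qed
    then show ?thesis using 1 by (simp add: hedge_in_MM Hof_def)
  next
    case 2
    have vv: "(x,0) \<in> verts n" using 2 by simp
    have inv: "(x,0) \<in> vedge x" by (simp add: mem_vedge)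
    have "\<not> cov (Hof P) x"
    proof
      assume "cov (Hof P) x"
      then have "hedge x 0 \<in> P \<or> (0 < x \<and> hedge (x-1) 0 \<in> P)" unfolding cov_def Hof_def by blast
      then show False
      proof (elim disjE conjE)
        assume h: "hedge x 0 \<in> P"
        have "(x,0) \<in> hedge x 0" by (simp add: mem_hedge)
        then have "hedge x 0 = vedge x" using pm_unique[OF pm vv] h e 2 inv by blast
        then show False by simp
      next
        assume x0: "0 < x" and h: "hedge (x-1) 0 \<in> P"
        have "(x,0) \<in> hedge (x-1) 0" using x0 by (simp add: mem_hedge)
        then have "hedge (x-1) 0 = vedge x" using pm_unique[OF pm vv] h e 2 inv by blast
        then show False by simp
      qed
    qed
    then show ?thesis using 2 by (simp add: vedge_in_MM)
  qed
next
  fix e assume e: "e \<in> MM n (Hof P)"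
  then consider x y where "e = hedge x y" "x \<in> Hof P" "y \<le> 1" | x where "e = vedge x" "x \<le> 2*n+1" "\<not> cov (Hof P) x"
    unfolding MM_def by blast
  then show "e \<in> P"
  proof cases
    case 1
    then have h0: "hedge x 0 \<in> P" unfolding Hof_def by simp
    show ?thesis
    proof (cases "y = 0")
      case True then show ?thesis using h0 1 by simp
    next
      case False then have "y = 1" using 1 by simp
      then show ?thesis using pm_pair[OF pm, of 0 x] h0 1 by simp
    qed
  next
    case 2
    have vv: "(x,0) \<in> verts n" using 2 by simp
    obtain f where f: "f \<in> P" "(x,0) \<in> f" using pm_exists[OF pm vv] by blast
    have "f = hedge x 0 \<or> (0 < x \<and> f = hedge (x-1) 0) \<or> f = vedge x"
      using edges_at[OF pm_edges[OF pm f(1)] f(2)] .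
    moreover have "f \<noteq> hedge x 0" using 2 f unfolding cov_def Hof_def by auto
    moreover have "\<not> (0 < x \<and> f = hedge (x-1) 0)" using 2 f unfolding cov_def Hof_def by auto
    ultimately have "f = vedge x" by blast
    then show ?thesis using f 2 by simp
  qed
qed

lemma fw1: "face_weight t = 1 \<longleftrightarrow> even t" unfolding face_weight_def by simp
lemma fw2: "face_weight t = 2 \<longleftrightarrow> odd t" unfolding face_weight_def by simp

lemma hedge_in_Pmin: "hedge x y \<in> Pmin n \<longleftrightarrow> x \<le> 2*n \<and> y \<le> 1 \<and> even x"
  unfolding Pmin_def face_weight_def by auto

lemma vedge_notin_Pmin: "vedge x \<notin> Pmin n"
  unfolding Pmin_def by auto

lemma block_sub: "block_cycle a b \<subseteq> S \<longleftrightarrow>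
   vedge a \<in> S \<and> vedge (b+1) \<in> S \<and> (\<forall>x y. a \<le> x \<and> x \<le> b \<and> y \<le> 1 \<longrightarrow> hedge x y \<in> S)"
  unfolding block_cycle_def by blast

lemma sd_hedge: "x \<le> 2*n \<Longrightarrow> y \<le> 1 \<Longrightarrow>
   hedge x y \<in> symdiff (MM n H) (Pmin n) \<longleftrightarrow> (x \<in> H \<longleftrightarrow> odd x)"
  unfolding symdiff_def by (auto simp: hedge_in_MM hedge_in_Pmin)

lemma sd_vedge: "vedge x \<in> symdiff (MM n H) (Pmin n) \<longleftrightarrow> x \<le> 2*n+1 \<and> \<not> cov H x"
  unfolding symdiff_def by (auto simp: vedge_in_MM vedge_notin_Pmin)

lemma left_walk:
  assumes g: "good n H"
  shows "t \<le> 2*n \<Longrightarrow> (t \<in> H \<longleftrightarrow> odd t) \<Longrightarrow>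
    \<exists>a\<le>t. \<not> cov H a \<and> (\<forall>x. a \<le> x \<and> x \<le> t \<longrightarrow> (x \<in> H \<longleftrightarrow> odd x))"
proof (induction t)
  case 0
  have "\<not> cov H 0" using 0 unfolding cov_def by simp
  then show ?case using 0 by auto
next
  case (Suc t)
  show ?case
  proof (cases "cov H (Suc t)")
    case False
    then show ?thesis using Suc.prems by (intro exI[of _ "Suc t"]) (auto simp: le_Suc_eq)
  next
    case True
    have ht: "t \<in> H \<longleftrightarrow> odd t"
    proof (cases "Suc t \<in> H")
      case True
      then have "odd (Suc t)" using Suc.prems by simp
      moreover have "t \<notin> H" using True g unfolding good_def by blast
      ultimately show ?thesis by simp
    next
      case False
      then have "t \<in> H" using \<open>cov H (Suc t)\<close> unfolding cov_def by simp
      moreover have "even (Suc t)" using Suc.prems False by simp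
      ultimately show ?thesis by simp
    qed
    obtain a where a: "a \<le> t" "\<not> cov H a" "\<forall>x. a \<le> x \<and> x \<le> t \<longrightarrow> (x \<in> H \<longleftrightarrow> odd x)"
      using Suc.IH[OF _ ht] Suc.prems by auto
    show ?thesis
    proof (intro exI[of _ a] conjI allI impI)
      show "a \<le> Suc t" using a by simp
      show "\<not> cov H a" using a by simp
      fix x assume ax: "a \<le> x \<and> x \<le> Suc t"
      show "x \<in> H \<longleftrightarrow> odd x"
      proof (cases "x = Suc t")
        case True then show ?thesis using Suc.prems by simp
      next
        case False then have "x \<le> t" using ax by simp
        then show ?thesis using a(3) ax by blast
      qed
    qed
  qed
qed

lemma right_walk:
  assumes g: "good n H"
  shows "t \<le> 2*n \<Longrightarrow> (t \<in> H \<longleftrightarrow> odd t) \<Longrightarrow>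
    \<exists>b. t \<le> b \<and> b \<le> 2*n \<and> \<not> cov H (b+1) \<and> (\<forall>x. t \<le> x \<and> x \<le> b \<longrightarrow> (x \<in> H \<longleftrightarrow> odd x))"
proof (induction "2*n - t" arbitrary: t)
  case 0
  then have t: "t = 2*n" by simp
  have "2*n+1 \<notin> H" using g unfolding good_def by auto
  moreover have "2*n \<notin> H" using 0(3) t by simp
  ultimately have "\<not> cov H (t+1)" using t unfolding cov_def by simp
  then show ?case using t 0(3) by (intro exI[of _ t]) auto
next
  case (Suc k)
  show ?case
  proof (cases "cov H (t+1)")
    case False
    then show ?thesis using Suc.prems by (intro exI[of _ t]) auto
  next
    case True
    have H: "H \<subseteq> {..2*n}" using g unfolding good_def by simp
    have t1: "t + 1 \<le> 2*n" using Suc.hyps by simp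
    have ht: "Suc t \<in> H \<longleftrightarrow> odd (Suc t)"
    proof (cases "t \<in> H")
      case True
      then have "odd t" using Suc.prems by simp
      moreover have "Suc t \<notin> H" using True g unfolding good_def by blast
      ultimately show ?thesis by simp
    next
      case False
      then have "Suc t \<in> H" using True unfolding cov_def by simp
      moreover have "even t" using Suc.prems False by simp
      ultimately show ?thesis by simp
    qed
    have "k = 2*n - Suc t" using Suc.hyps by simp
    then obtain b where b: "Suc t \<le> b" "b \<le> 2*n" "\<not> cov H (b+1)"
        "\<forall>x. Suc t \<le> x \<and> x \<le> b \<longrightarrow> (x \<in> H \<longleftrightarrow> odd x)"
      using Suc.hyps(1)[of "Suc t"] t1 ht by auto
    show ?thesis
    proof (intro exI[of _ b] conjI allI impI)
      show "t \<le> b" "b \<le> 2*n" "\<not> cov H (b+1)" using b by auto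
      fix x assume "t \<le> x \<and> x \<le> b"
      then have "x = t \<or> Suc t \<le> x \<and> x \<le> b" by auto
      then show "x \<in> H \<longleftrightarrow> odd x" using b Suc.prems by auto
    qed
  qed
qed

lemma Twist_MM:
  assumes g: "good n H"
  shows "Twist n (MM n H) = {t. t \<le> 2*n \<and> (t \<in> H \<longleftrightarrow> odd t)}"
proof (intro equalityI subsetI)
  fix t assume "t \<in> Twist n (MM n H)"
  then obtain a b where ab: "t \<le> 2*n" "a \<le> t" "t \<le> b" "b \<le> 2*n"
      "block_cycle a b \<subseteq> symdiff (MM n H) (Pmin n)"
    unfolding Twist_def by blast
  then have "hedge t 0 \<in> symdiff (MM n H) (Pmin n)" unfolding block_sub by auto
  then show "t \<in> {t. t \<le> 2*n \<and> (t \<in> H \<longleftrightarrow> odd t)}" using ab sd_hedge[of t n 0 H] by simp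
next
  fix t assume "t \<in> {t. t \<le> 2*n \<and> (t \<in> H \<longleftrightarrow> odd t)}"
  then have t: "t \<le> 2*n" "t \<in> H \<longleftrightarrow> odd t" by auto
  obtain a where a: "a \<le> t" "\<not> cov H a" "\<forall>x. a \<le> x \<and> x \<le> t \<longrightarrow> (x \<in> H \<longleftrightarrow> odd x)"
    using left_walk[OF g t] by blast
  obtain b where b: "t \<le> b" "b \<le> 2*n" "\<not> cov H (b+1)" "\<forall>x. t \<le> x \<and> x \<le> b \<longrightarrow> (x \<in> H \<longleftrightarrow> odd x)"
    using right_walk[OF g t] by blast
  have "block_cycle a b \<subseteq> symdiff (MM n H) (Pmin n)"
    unfolding block_sub
  proof (intro conjI allI impI)
    show "vedge a \<in> symdiff (MM n H) (Pmin n)" using a b t by (simp add: sd_vedge)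
    show "vedge (b+1) \<in> symdiff (MM n H) (Pmin n)" using b by (simp add: sd_vedge)
    fix x and y :: nat assume xy: "a \<le> x \<and> x \<le> b \<and> y \<le> 1"
    have "x \<in> H \<longleftrightarrow> odd x"
    proof (cases "x \<le> t")
      case True then show ?thesis using a xy by blast
    next
      case False then show ?thesis using b xy by auto
    qed
    then show "hedge x y \<in> symdiff (MM n H) (Pmin n)" using sd_hedge[of x n y H] xy b by simp
  qed
  then show "t \<in> Twist n (MM n H)" unfolding Twist_def using t a b by blast
qed

lemma card_evens: "card {t::nat. t \<le> 2*n \<and> even t} = n + 1"
proof -
  have "{t::nat. t \<le> 2*n \<and> even t} = (\<lambda>k. 2*k) ` {..n}"
    by (auto elim!: evenE)
  moreover have "inj_on (\<lambda>k::nat. 2*k) {..n}" by (auto simp: inj_on_def)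
  ultimately show ?thesis by (simp add: card_image)
qed

lemma ev_le: "good n H \<Longrightarrow> ev H \<le> n + 1"
proof -
  assume g: "good n H"
  have "{x\<in>H. even x} \<subseteq> {t. t \<le> 2*n \<and> even t}" using g unfolding good_def by auto
  moreover have "finite {t::nat. t \<le> 2*n \<and> even t}" by (rule finite_subset[of _ "{..2*n}"]) auto
  ultimately have "card {x\<in>H. even x} \<le> card {t::nat. t \<le> 2*n \<and> even t}" by (intro card_mono)
  then show ?thesis unfolding ev_def card_evens .
qed

lemma y1_MM: assumes g: "good n H" shows "y_count n 1 (MM n H) = n + 1 - ev H"
proof -
  have "{t \<in> Twist n (MM n H). face_weight t = 1} = {t. t \<le> 2*n \<and> even t} - {x\<in>H. even x}"
    unfolding Twist_MM[OF g] fw1 by auto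
  moreover have "{x\<in>H. even x} \<subseteq> {t. t \<le> 2*n \<and> even t}" using g unfolding good_def by auto
  ultimately show ?thesis unfolding y_count_def ev_def
    by (simp add: card_Diff_subset card_evens finite_subset)
qed

lemma y2_MM: assumes g: "good n H" shows "y_count n 2 (MM n H) = od H"
proof -
  have "{t \<in> Twist n (MM n H). face_weight t = 2} = {x\<in>H. odd x}"
    unfolding Twist_MM[OF g] fw2 using g unfolding good_def by auto
  then show ?thesis unfolding y_count_def od_def by simp
qed

definition rp :: "nat \<Rightarrow> vert \<Rightarrow> vert" where "rp n = (\<lambda>(x,y). (2*n+1-x, y))"

lemma reflect_rp: "reflect n P = (\<lambda>e. rp n ` e) ` P"
  unfolding reflect_def rp_def by simp

lemma rp_hedge: "x \<le> 2*n \<Longrightarrow> rp n ` hedge x y = hedge (2*n-x) y"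
  unfolding rp_def hedge_def by auto

lemma rp_vedge: "rp n ` vedge x = vedge (2*n+1-x)"
  unfolding rp_def vedge_def by auto

lemma rp_invol: "e \<in> edges n \<Longrightarrow> rp n ` (rp n ` e) = e"
proof -
  assume "e \<in> edges n"
  then consider x y where "e = hedge x y" "x \<le> 2*n" | x where "e = vedge x" "x \<le> 2*n+1"
    unfolding edges_def by blast
  then show ?thesis
  proof cases
    case 1 then show ?thesis by (simp add: rp_hedge)
  next
    case 2 then show ?thesis by (simp add: rp_vedge)
  qed
qed

lemma rp_MM:
  assumes g: "good n H" and s: "\<forall>x\<in>H. 2*n - x \<in> H" and e: "e \<in> MM n H"
  shows "rp n ` e \<in> MM n H"
proof -
  have Hs: "H \<subseteq> {..2*n}" using g unfolding good_def by simp
  from e consider x y where "e = hedge x y" "x \<in> H" "y \<le> 1" | x where "e = vedge x" "x \<le> 2*n+1" "\<not> cov H x"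
    unfolding MM_def by blast
  then show ?thesis
  proof cases
    case 1
    then have "x \<le> 2*n" using Hs by auto
    then show ?thesis using 1 s by (simp add: rp_hedge hedge_in_MM)
  next
    case 2
    let ?u = "2*n+1-x"
    have "\<not> cov H ?u"
    proof
      assume "cov H ?u"
      then have "?u \<in> H \<or> (0 < ?u \<and> ?u - 1 \<in> H)" unfolding cov_def .
      then show False
      proof (elim disjE conjE)
        assume u: "?u \<in> H"
        then have "?u \<le> 2*n" using Hs by auto
        then have x0: "0 < x" by simp
        have "2*n - ?u \<in> H" using s u by blast
        moreover have "2*n - ?u = x - 1" using x0 2 by simp
        ultimately show False using 2 x0 unfolding cov_def by simp
      next
        assume u0: "0 < ?u" and u: "?u - 1 \<in> H"
        then have xl: "x \<le> 2*n" by simp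
        have "2*n - (?u - 1) \<in> H" using s u by blast
        moreover have "2*n - (?u - 1) = x" using xl by simp
        ultimately show False using 2 unfolding cov_def by simp
      qed
    qed
    then show ?thesis using 2 by (simp add: rp_vedge vedge_in_MM)
  qed
qed

lemma sym_MM:
  assumes g: "good n H"
  shows "reflect n (MM n H) = MM n H \<longleftrightarrow> (\<forall>x\<in>H. 2*n - x \<in> H)"
proof
  assume R: "reflect n (MM n H) = MM n H"
  show "\<forall>x\<in>H. 2*n - x \<in> H"
  proof
    fix x assume x: "x \<in> H"
    then have "hedge x 0 \<in> reflect n (MM n H)" using R by (simp add: hedge_in_MM)
    then obtain e where e: "e \<in> MM n H" "rp n ` e = hedge x 0" unfolding reflect_rp by blast
    from e(1) consider a y where "e = hedge a y" "a \<in> H" "y \<le> 1" | a where "e = vedge a"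
      unfolding MM_def by blast
    then show "2*n - x \<in> H"
    proof cases
      case 1
      have "a \<le> 2*n" using 1 g unfolding good_def by auto
      then have "hedge (2*n - a) y = hedge x 0" using e(2) 1 by (simp add: rp_hedge)
      then have "x = 2*n - a" by simp
      then have "2*n - x = a" using \<open>a \<le> 2*n\<close> by simp
      then show ?thesis using 1 by simp
    next
      case 2
      then show ?thesis using e(2) by (simp add: rp_vedge)
    qed
  qed
next
  assume s: "\<forall>x\<in>H. 2*n - x \<in> H"
  show "reflect n (MM n H) = MM n H"
  proof (intro equalityI subsetI)
    fix e assume "e \<in> reflect n (MM n H)"
    then obtain f where "f \<in> MM n H" "e = rp n ` f" unfolding reflect_rp by blast
    then show "e \<in> MM n H" using rp_MM[OF g s] by simp
  next
    fix e assume e: "e \<in> MM n H"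
    have "e \<in> edges n" using e MM_sub[OF g] by blast
    then have "e = rp n ` (rp n ` e)" by (simp add: rp_invol)
    moreover have "rp n ` e \<in> MM n H" using rp_MM[OF g s e] .
    ultimately show "e \<in> reflect n (MM n H)" unfolding reflect_rp by blast
  qed
qed

lemma indep_good: "H \<in> indep n \<longleftrightarrow> good n H \<and> (\<forall>x\<in>H. 2*n - x \<in> H)"
  unfolding indep_def good_def by simp

lemma S_eq:
  assumes rn: "r \<le> n"
  shows "{P \<in> Match n p r. reflect n P = P} = MM n ` {H \<in> indep n. ev H = r \<and> od H = p}"
proof (intro equalityI subsetI)
  fix P assume "P \<in> {P \<in> Match n p r. reflect n P = P}"
  then have pm: "perfect_matching n P" and y1: "y_count n 1 P = n + 1 - r" and y2: "y_count n 2 P = p"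
    and R: "reflect n P = P" unfolding Match_def by auto
  let ?H = "Hof P"
  have g: "good n ?H" using pm_good[OF pm] .
  have P: "P = MM n ?H" using pm_MM[OF pm] .
  have s: "\<forall>x\<in>?H. 2*n - x \<in> ?H" using R P sym_MM[OF g] by simp
  have "n + 1 - ev ?H = n + 1 - r" using y1 y1_MM[OF g] P by simp
  then have "ev ?H = r" using ev_le[OF g] rn by simp
  moreover have "od ?H = p" using y2 y2_MM[OF g] P by simp
  ultimately have "?H \<in> {H \<in> indep n. ev H = r \<and> od H = p}" using g s indep_good by blast
  then show "P \<in> MM n ` {H \<in> indep n. ev H = r \<and> od H = p}" using P by blast
next
  fix P assume "P \<in> MM n ` {H \<in> indep n. ev H = r \<and> od H = p}"
  then obtain H where H: "H \<in> indep n" "ev H = r" "od H = p" and P: "P = MM n H" by blast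
  have g: "good n H" and s: "\<forall>x\<in>H. 2*n - x \<in> H" using H(1) indep_good by auto
  have "perfect_matching n P" using MM_pm[OF g] P by simp
  moreover have "y_count n 1 P = n + 1 - r" using y1_MM[OF g] P H by simp
  moreover have "y_count n 2 P = p" using y2_MM[OF g] P H by simp
  moreover have "reflect n P = P" using sym_MM[OF g] s P by simp
  ultimately show "P \<in> {P \<in> Match n p r. reflect n P = P}" unfolding Match_def by simp
qed

theorem mainTheorem11:
  fixes p r n :: nat
  assumes "p + r \<le> n"
  shows "gauss_binom_m1 (n - r) p * gauss_binom_m1 (n + 1 - p) r
           = real (card {P \<in> Match n p r. reflect n P = P})"
proof -
  have rn: "r \<le> n" using assms by simp
  have inj: "inj_on (MM n) {H \<in> indep n. ev H = r \<and> od H = p}"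
    by (rule inj_on_inverseI[where g = Hof]) (simp add: Hof_MM)
  have "card {P \<in> Match n p r. reflect n P = P} = card {H \<in> indep n. ev H = r \<and> od H = p}"
    unfolding S_eq[OF rn] using card_image[OF inj] .
  also have "\<dots> = Cs n r p" unfolding Cs_def ..
  also have "\<dots> = gg (n - r) p * gg (n + 1 - p) r" using closed_form by blast
  finally show ?thesis by (simp add: gauss_gg)
qed

end
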